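(* Let $X$ be a Banach space, $f_1,f_2:X\to\mathbb{R}\cup\{+\infty\}$ convex functions, $\bar x\in\operatorname{dom} f_1\cap\operatorname{dom} f_2$, and suppose $0\in\partial f_1(\bar x)+\partial f_2(\bar x)$. Then the pair $\{f_1,f_2\}$ is uniformly lower semicontinuous on $X$, i.e., $\inf_{x\in X}(f_1+f_2)(x)\le \liminf_{\|x-u\|\to 0}\big(f_1(x)+f_2(u)\big)$.
   Context: $\operatorname{dom} f=\{x: f(x)<+\infty\}$. The (Fenchel) subdifferential of $f$ at $\bar x\in\operatorname{dom} f$ is $\partial f(\bar x)=\{x^*\in X^*: f(x)-f(\bar x)-\langle x^*,x-\bar x\rangle\ge0\ \forall x\in X\}$. Here $\liminf_{\|x-u\|\to0}(f_1(x)+f_2(u)):=\lim_{\delta\downarrow0}\inf\{f_1(x)+f_2(u): x,u\in X,\ \|x-u\|<\delta\}$; this is the uniform infimum $\Lambda_X(\{f_1,f_2\})$ of the pair on $X$, and uniform lower semicontinuity on $X$ means $\inf_X(f_1+f_2)\le\Lambda_X(\{f_1,f_2\})$. *)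

theory Defs
  imports "HOL-Analysis.Analysis"
begin

text \<open>Extended-real-valued functions f : X -> R \<union> {+\<infinity>} are modelled as
  f :: 'a \<Rightarrow> ereal with f never taking the value -\<infinity>.\<close>

definition efun_dom :: "('a \<Rightarrow> ereal) \<Rightarrow> 'a set" where
  "efun_dom f = {x. f x < \<infinity>}"

text \<open>Convexity of an extended-real-valued function (ereal arithmetic, 0 * \<infinity> = 0).\<close>
definition ext_convex :: "('a::real_vector \<Rightarrow> ereal) \<Rightarrow> bool" where
  "ext_convex f \<longleftrightarrow> (\<forall>x y. \<forall>t::real. 0 \<le> t \<and> t \<le> 1 \<longrightarrow>
      f ((1 - t) *\<^sub>R x + t *\<^sub>R y) \<le> ereal (1 - t) * f x + ereal t * f y)"

definition fenchel_subdiff :: "('a::real_normed_vector \<Rightarrow> ereal) \<Rightarrow> 'a \<Rightarrow> ('a \<Rightarrow>\<^sub>L real) set" where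
  "fenchel_subdiff f xb = {xs. \<forall>x. f x - f xb - ereal (blinfun_apply xs (x - xb)) \<ge> 0}"

text \<open>Uniform infimum \<Lambda>_X({f1,f2}) = lim_{\<delta>\<down>0} inf{f1 x + f2 u : ||x-u|| < \<delta>}.
  The inner infimum is nonincreasing in \<delta>, so the limit as \<delta>\<down>0 is the supremum over \<delta>>0.\<close>
definition uniform_inf :: "('a::real_normed_vector \<Rightarrow> ereal) \<Rightarrow> ('a \<Rightarrow> ereal) \<Rightarrow> ereal" where
  "uniform_inf f1 f2 = (SUP \<delta>\<in>{0<..}. INF p\<in>{(x, u). norm (x - u) < \<delta>}. f1 (fst p) + f2 (snd p))"

end

theory Submission
  imports Defs
begin

lemma sub_aux:
  fixes y :: ereal
  assumes "y - ereal a - ereal r \<ge> 0"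
  shows "ereal (a + r) \<le> y"
  using assms by (cases y) auto

theorem proposition2p4:
  fixes f1 f2 :: "'a::banach \<Rightarrow> ereal" and xb :: 'a
  assumes f1_proper: "\<forall>x. f1 x \<noteq> -\<infinity>" and f2_proper: "\<forall>x. f2 x \<noteq> -\<infinity>"
    and f1_convex: "ext_convex f1" and f2_convex: "ext_convex f2"
    and xb_dom: "xb \<in> efun_dom f1 \<inter> efun_dom f2"
    and zero_in: "\<exists>xs1\<in>fenchel_subdiff f1 xb. \<exists>xs2\<in>fenchel_subdiff f2 xb. xs1 + xs2 = 0"
  shows "(INF x. f1 x + f2 x) \<le> uniform_inf f1 f2"
proof -
  obtain s1 s2 where s1: "s1 \<in> fenchel_subdiff f1 xb" and s2: "s2 \<in> fenchel_subdiff f2 xb"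
    and s12: "s1 + s2 = 0" using zero_in by blast
  obtain a where a: "f1 xb = ereal a" using xb_dom f1_proper unfolding efun_dom_def
    by (cases "f1 xb") auto
  obtain b where b: "f2 xb = ereal b" using xb_dom f2_proper unfolding efun_dom_def
    by (cases "f2 xb") auto
  have h1: "ereal (a + blinfun_apply s1 (x - xb)) \<le> f1 x" for x
    using s1 a unfolding fenchel_subdiff_def by (intro sub_aux) (metis (mono_tags, lifting) mem_Collect_eq)
  have h2: "ereal (b + blinfun_apply s2 (x - xb)) \<le> f2 x" for x
    using s2 b unfolding fenchel_subdiff_def by (intro sub_aux) (metis (mono_tags, lifting) mem_Collect_eq)
  have s2eq: "blinfun_apply s2 v = - blinfun_apply s1 v" for v
  proof -
    have "blinfun_apply (s1 + s2) v = 0" using s12 by simp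
    then show ?thesis by (simp add: plus_blinfun.rep_eq)
  qed
  define K where "K = norm s1 + 1"
  have Kpos: "K > 0" unfolding K_def by (smt (verit) norm_ge_zero)
  have key: "ereal (a + b - K * d) \<le> f1 x + f2 u" if "norm (x - u) < d" for x u d
  proof -
    have lin: "blinfun_apply s1 (x - xb) - blinfun_apply s1 (u - xb) = blinfun_apply s1 (x - u)"
      by (metis blinfun.diff_right diff_diff_eq2 diff_add_cancel add_diff_cancel_right)
    have "\<bar>blinfun_apply s1 (x - u)\<bar> \<le> norm s1 * norm (x - u)"
      using norm_blinfun[of s1 "x - u"] by simp
    also have "\<dots> \<le> K * d"
    proof -
      have "norm s1 * norm (x - u) \<le> norm s1 * d"
        using that by (intro mult_left_mono) auto
      also have "\<dots> \<le> K * d" unfolding K_def using that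
        by (metis add.commute le_add_same_cancel2 less_eq_real_def mult_right_mono norm_ge_zero order.strict_trans1 zero_less_one)
      finally show ?thesis .
    qed
    finally have "a + b - K * d \<le> (a + blinfun_apply s1 (x - xb)) + (b + blinfun_apply s2 (u - xb))"
      using lin s2eq by (smt (verit))
    then have "ereal (a + b - K * d) \<le> ereal (a + blinfun_apply s1 (x - xb)) + ereal (b + blinfun_apply s2 (u - xb))"
      by simp
    also have "\<dots> \<le> f1 x + f2 u" using h1 h2 by (intro add_mono) auto
    finally show ?thesis .
  qed
  have main: "ereal (a + b) \<le> uniform_inf f1 f2"
  proof (rule ereal_le_epsilon2)
    fix e :: real assume e: "e > 0"
    define d where "d = e / K"
    have d: "d > 0" using e Kpos unfolding d_def by simp
    have Kd: "K * d = e" using Kpos unfolding d_def by simp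
    have "ereal (a + b - e) \<le> (INF p\<in>{(x, u). norm (x - u) < d}. f1 (fst p) + f2 (snd p))"
      using key[of _ _ d] Kd by (intro INF_greatest) auto
    also have "\<dots> \<le> uniform_inf f1 f2" unfolding uniform_inf_def
      using d by (intro SUP_upper) auto
    finally have "ereal (a + b - e) + ereal e \<le> uniform_inf f1 f2 + ereal e"
      by (intro add_right_mono)
    then show "ereal (a + b) \<le> uniform_inf f1 f2 + ereal e" by simp
  qed
  have "(INF x. f1 x + f2 x) \<le> f1 xb + f2 xb" by (rule INF_lower) simp
  also have "\<dots> = ereal (a + b)" using a b by simp
  finally show ?thesis using main by simp
qed

end
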